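(* For every $k\ge1$, every $\sigma\in S_k$ and every real $x>2k^2$, $$\sum_{\rho\in S_k\text{ a }k\text{-cycle}}x^{-|\sigma\rho^{-1}|}\le 2\,\frac{(k-1)!}{(k-|\mathsf{cyc}(\sigma)|+1)!}\,k^{|\mathsf{cyc}(\sigma)|}\,x^{-|\mathsf{cyc}(\sigma)|+1}.$$
   Context: $S_k$ is the symmetric group on $\{1,\dots,k\}$; $\mathsf{cyc}(\sigma)$ is the set of cycles of $\sigma$ (fixed points included). The Cayley weight $|\sigma|$ of $\sigma\in S_k$ is the minimum number of transpositions whose product is $\sigma$; equivalently $|\sigma|=k-|\mathsf{cyc}(\sigma)|$. *)

theory Defs
  imports "HOL-Analysis.Analysis" "HOL-Combinatorics.Combinatorics"
begin

definition Sym :: "nat \<Rightarrow> (nat \<Rightarrow> nat) set" where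
  "Sym k = {\<sigma>. \<sigma> permutes {1..k}}"

text \<open>Set of cycles of sigma on {1..k}, fixed points included (as singleton orbits).\<close>
definition cyc :: "nat \<Rightarrow> (nat \<Rightarrow> nat) \<Rightarrow> nat set set" where
  "cyc k \<sigma> = (\<lambda>i. orbit \<sigma> i) ` {1..k}"

definition cayley_weight :: "nat \<Rightarrow> (nat \<Rightarrow> nat) \<Rightarrow> nat" where
  "cayley_weight k \<sigma> = k - card (cyc k \<sigma>)"

definition full_cycles :: "nat \<Rightarrow> (nat \<Rightarrow> nat) set" where
  "full_cycles k = {\<rho> \<in> Sym k. card (cyc k \<rho>) = 1}"

end

theory Submission
  imports Defs
begin


definition ncyc :: "'a set \<Rightarrow> ('a \<Rightarrow> 'a) \<Rightarrow> nat" where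
  "ncyc S f = card ((\<lambda>i. orbit f i) ` S)"

lemma orb_eq:
  assumes "permutation f" "y \<in> orbit f x"
  shows "orbit f y = orbit f x"
proof -
  have x: "x \<in> orbit f x" using assms(1) by (rule permutation_self_in_orbit)
  have "x \<in> orbit f y" using orbit_swap[OF x assms(2)] .
  then show ?thesis using assms(2) by (auto intro: orbit_trans)
qed

lemma orb_least:
  assumes "f a \<in> A" "\<And>y. y \<in> A \<Longrightarrow> f y \<in> A"
  shows "orbit f a \<subseteq> A"
proof
  fix z assume "z \<in> orbit f a" then show "z \<in> A" by induct (use assms in auto)
qed

lemma merge:
  assumes fS: "f permutes S" and fin: "finite S" and a: "a \<in> S" and b: "b \<in> S"
    and nb: "b \<notin> orbit f a"
  shows "ncyc S f = Suc (ncyc S (Transposition.transpose a b \<circ> f))"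
proof -
  define g where "g = Transposition.transpose a b \<circ> f"
  have pf: "permutation f" using fS fin permutation_permutes by blast
  have gS: "g permutes S" unfolding g_def by (rule permutes_compose[OF fS permutes_swap_id[OF a b]])
  have pg: "permutation g" using gS fin permutation_permutes by blast
  have self: "\<And>x. x \<in> orbit f x" using pf permutation_self_in_orbit by metis
  have gself: "\<And>x. x \<in> orbit g x" using pg permutation_self_in_orbit by metis
  have ab: "a \<noteq> b" using nb self by metis
  define Oa where "Oa = orbit f a"
  define Ob where "Ob = orbit f b"
  have eqo: "\<And>x y. y \<in> orbit f x \<Longrightarrow> orbit f y = orbit f x" using orb_eq pf by metis
  have geqo: "\<And>x y. y \<in> orbit g x \<Longrightarrow> orbit g y = orbit g x" using orb_eq pg by metis
  have disj: "Oa \<inter> Ob = {}"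
  proof (rule ccontr)
    assume "Oa \<inter> Ob \<noteq> {}" then obtain z where "z \<in> Oa" "z \<in> Ob" by auto
    then have "Oa = Ob" unfolding Oa_def Ob_def using eqo by metis
    then show False using nb self Oa_def Ob_def by metis
  qed
  have fOa: "\<And>y. y \<in> Oa \<Longrightarrow> f y \<in> Oa" unfolding Oa_def by (rule orbit.step)
  have fOb: "\<And>y. y \<in> Ob \<Longrightarrow> f y \<in> Ob" unfolding Ob_def by (rule orbit.step)
  have aOa: "a \<in> Oa" "b \<in> Ob" using self Oa_def Ob_def by auto
  have gfy: "\<And>y. f y \<noteq> a \<Longrightarrow> f y \<noteq> b \<Longrightarrow> g y = f y" unfolding g_def by simp
  have sub1: "Oa \<subseteq> orbit g a"
  proof
    fix y assume "y \<in> Oa"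
    then show "y \<in> orbit g a" unfolding Oa_def
    proof induct
      case base
      show ?case
      proof (cases "f a = a")
        case True then show ?thesis using gself by simp
      next
        case False
        have "f a \<in> Ob \<Longrightarrow> False" using disj fOa aOa by blast
        then have "f a \<noteq> b" using aOa by blast
        then show ?thesis using gfy[OF False] orbit.base[of g a] by simp
      qed
    next
      case (step y)
      show ?case
      proof (cases "f y = a")
        case True then show ?thesis using gself by simp
      next
        case False
        have "f y \<in> Oa" using step(1) fOa Oa_def by simp
        then have "f y \<noteq> b" using disj aOa by blast
        then show ?thesis using gfy[OF False] orbit.step[OF step(2)] by simp
      qed
    qed
  qed
  have sub2: "Ob \<subseteq> orbit g b"
  proof
    fix y assume "y \<in> Ob"
    then show "y \<in> orbit g b" unfolding Ob_def
    proof induct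
      case base
      show ?case
      proof (cases "f b = b")
        case True then show ?thesis using gself by simp
      next
        case False
        have "f b \<in> Oa \<Longrightarrow> False" using disj fOb aOa by blast
        then have "f b \<noteq> a" using aOa by blast
        then show ?thesis using gfy[OF _ False] orbit.base[of g b] by simp
      qed
    next
      case (step y)
      show ?case
      proof (cases "f y = b")
        case True then show ?thesis using gself by simp
      next
        case False
        have "f y \<in> Ob" using step(1) fOb Ob_def by simp
        then have "f y \<noteq> a" using disj aOa by blast
        then show ?thesis using gfy[OF _ False] orbit.step[OF step(2)] by simp
      qed
    qed
  qed
  define y0 where "y0 = inv f a"
  have fy0: "f y0 = a" unfolding y0_def using permutes_inverses(1)[OF fS] by simp
  have "orbit f y0 = orbit f (f y0)" using permutation_orbit_step[OF pf] by simp
  then have "y0 \<in> Oa" using self fy0 Oa_def by metis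
  then have "y0 \<in> orbit g a" using sub1 by auto
  then have "g y0 \<in> orbit g a" by (rule orbit.step)
  moreover have "g y0 = b" unfolding g_def using fy0 by simp
  ultimately have "b \<in> orbit g a" by simp
  then have gb: "orbit g b = orbit g a" using geqo by metis
  define U where "U = Oa \<union> Ob"
  have "orbit g a \<subseteq> U"
  proof (rule orb_least)
    have tU: "\<And>z. z \<in> U \<Longrightarrow> Transposition.transpose a b z \<in> U" using aOa unfolding U_def
      by (metis Un_iff transpose_apply_first transpose_apply_other transpose_apply_second)
    show "\<And>y. y \<in> U \<Longrightarrow> g y \<in> U" unfolding g_def using tU fOa fOb U_def by auto
    then show "g a \<in> U" using aOa U_def by auto
  qed
  then have gaU: "orbit g a = U" using sub1 sub2 gb U_def by auto
  have gU: "\<And>z. z \<in> U \<Longrightarrow> orbit g z = U" using gaU geqo by metis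
  have fU: "\<And>z. z \<in> U \<Longrightarrow> orbit f z = Oa \<or> orbit f z = Ob" using eqo U_def Oa_def Ob_def by auto
  have gout: "\<And>x. x \<in> S - U \<Longrightarrow> orbit g x = orbit f x"
  proof -
    fix x assume x: "x \<in> S - U"
    have dx: "orbit f x \<inter> U = {}"
    proof (rule ccontr)
      assume "orbit f x \<inter> U \<noteq> {}"
      then obtain z where z: "z \<in> orbit f x" "z \<in> U" by auto
      then have "orbit f x = orbit f z" using eqo by metis
      then have "x \<in> U" using fU[OF z(2)] self[of x] U_def by auto
      then show False using x by auto
    qed
    show "orbit g x = orbit f x"
    proof (rule orbit_cong[OF self])
      fix s assume "s \<in> orbit f x"
      then have "f s \<in> orbit f x" by (rule orbit.step)
      then have "f s \<notin> U" using dx by auto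
      then show "g s = f s" using gfy aOa U_def by (metis UnCI)
    qed
  qed
  define F where "F = (\<lambda>i. orbit f i)"
  define G where "G = (\<lambda>i. orbit g i)"
  have SU: "S = (S - U) \<union> (S \<inter> U)" by auto
  have aU: "a \<in> S \<inter> U" "b \<in> S \<inter> U" using a b aOa U_def by auto
  have "F ` (S \<inter> U) = {Oa, Ob}"
  proof
    show "F ` (S \<inter> U) \<subseteq> {Oa, Ob}" using fU F_def by auto
    show "{Oa, Ob} \<subseteq> F ` (S \<inter> U)" using aU F_def Oa_def Ob_def by auto
  qed
  then have F1: "F ` S = F ` (S - U) \<union> {Oa, Ob}" using SU by (metis image_Un)
  have "G ` (S \<inter> U) = {U}" using gU aU G_def by auto
  moreover have "G ` (S - U) = F ` (S - U)" using gout F_def G_def by auto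
  ultimately have G1: "G ` S = F ` (S - U) \<union> {U}" using SU by (metis image_Un)
  have notin: "\<And>Z. Z \<in> F ` (S - U) \<Longrightarrow> Z \<noteq> Oa \<and> Z \<noteq> Ob \<and> Z \<noteq> U"
  proof -
    fix Z assume "Z \<in> F ` (S - U)"
    then obtain x where x: "x \<in> S - U" "Z = orbit f x" using F_def by auto
    then have "x \<in> Z" using self by auto
    then show "Z \<noteq> Oa \<and> Z \<noteq> Ob \<and> Z \<noteq> U" using x U_def by auto
  qed
  have finF: "finite (F ` (S - U))" using fin by auto
  have OaOb: "Oa \<noteq> Ob" using disj aOa by auto
  have n1: "Oa \<notin> F ` (S - U)" "Ob \<notin> F ` (S - U)" "U \<notin> F ` (S - U)" using notin by blast+
  have "card (F ` S) = card (F ` (S - U)) + 2"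
    unfolding F1 using finF n1 OaOb by (simp add: card_insert_if)
  moreover have "card (G ` S) = card (F ` (S - U)) + 1"
    unfolding G1 using finF n1 by (simp add: card_insert_if)
  ultimately show ?thesis unfolding ncyc_def F_def G_def g_def by simp
qed

lemma split:
  assumes ab: "a \<noteq> b" and bo: "b \<in> orbit f a"
  shows "b \<notin> orbit (Transposition.transpose a b \<circ> f) a"
proof -
  define g where "g = Transposition.transpose a b \<circ> f"
  obtain n where n: "0 < n" "(f ^^ n) a = b" using bo by (auto simp: orbit_altdef)
  define n0 where "n0 = (LEAST n. 0 < n \<and> (f ^^ n) a = b)"
  have n0: "0 < n0" "(f ^^ n0) a = b" using LeastI[of "\<lambda>n. 0 < n \<and> (f ^^ n) a = b", OF conjI[OF n]]
    unfolding n0_def by auto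
  have mini: "\<And>m. 0 < m \<Longrightarrow> m < n0 \<Longrightarrow> (f ^^ m) a \<noteq> b"
    using not_less_Least unfolding n0_def by blast
  have nota: "\<And>m. 0 < m \<Longrightarrow> m < n0 \<Longrightarrow> (f ^^ m) a \<noteq> a"
  proof
    fix m assume m: "0 < m" "m < n0" "(f ^^ m) a = a"
    have "(f ^^ (n0 - m)) a = (f ^^ (n0 - m)) ((f ^^ m) a)" using m by simp
    also have "\<dots> = (f ^^ (n0 - m + m)) a" by (simp only: funpow_add comp_def)
    also have "\<dots> = (f ^^ n0) a" using m by simp
    finally show False using mini[of "n0 - m"] m n0 by simp
  qed
  define A where "A = {(f ^^ m) a | m. m < n0}"
  have gA: "\<And>y. y \<in> A \<Longrightarrow> g y \<in> A"
  proof -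
    fix y assume "y \<in> A"
    then obtain m where m: "m < n0" "y = (f ^^ m) a" unfolding A_def by auto
    have fy: "f y = (f ^^ Suc m) a" using m by simp
    show "g y \<in> A"
    proof (cases "Suc m < n0")
      case True
      have "(f ^^ Suc m) a \<noteq> a" "(f ^^ Suc m) a \<noteq> b" using True nota[of "Suc m"] mini[of "Suc m"] by auto
      then have "f y \<noteq> a" "f y \<noteq> b" using fy by simp_all
      then have "g y = (f ^^ Suc m) a" unfolding g_def using fy by simp
      then show ?thesis unfolding A_def using True by blast
    next
      case False
      then have "Suc m = n0" using m by simp
      then have "g y = a" unfolding g_def using fy n0 by simp
      then show ?thesis unfolding A_def using n0 by (metis (mono_tags, lifting) funpow_0 mem_Collect_eq)
    qed
  qed
  have "a \<in> A" unfolding A_def using n0 by (metis (mono_tags, lifting) funpow_0 mem_Collect_eq)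
  then have "orbit g a \<subseteq> A" using gA orb_least by metis
  moreover have "b \<notin> A"
  proof
    assume "b \<in> A"
    then obtain m where m: "m < n0" "b = (f ^^ m) a" unfolding A_def by auto
    show False using m mini ab by (cases "m = 0") auto
  qed
  ultimately show ?thesis unfolding g_def by auto
qed

lemma L1:
  assumes fS: "f permutes S" and fin: "finite S" and a: "a \<in> S" and b: "b \<in> S"
  shows "ncyc S (Transposition.transpose a b \<circ> f) \<le> ncyc S f + 1"
proof (cases "a = b")
  case True then show ?thesis by simp
next
  case ab: False
  show ?thesis
  proof (cases "b \<in> orbit f a")
    case False then show ?thesis using merge[OF assms False] by simp
  next
    case True
    define g where "g = Transposition.transpose a b \<circ> f"
    have gS: "g permutes S" unfolding g_def by (rule permutes_compose[OF fS permutes_swap_id[OF a b]])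
    have "b \<notin> orbit g a" using split[OF ab True] g_def by simp
    from merge[OF gS fin a b this] have "ncyc S g = Suc (ncyc S f)"
      unfolding g_def by (simp add: comp_assoc[symmetric])
    then show ?thesis unfolding g_def by simp
  qed
qed

lemma L2:
  assumes fS: "f permutes S" and fin: "finite S" and a: "a \<in> S" and fa: "f a \<noteq> a"
  shows "ncyc S (Transposition.transpose a (f a) \<circ> f) = ncyc S f + 1"
proof -
  have b: "f a \<in> S" using a fS permutes_in_image by metis
  define g where "g = Transposition.transpose a (f a) \<circ> f"
  have gS: "g permutes S" unfolding g_def by (rule permutes_compose[OF fS permutes_swap_id[OF a b]])
  have "f a \<notin> orbit g a" using split[OF fa[symmetric] orbit.base[of f a]] g_def by simp
  from merge[OF gS fin a b this] have "ncyc S g = Suc (ncyc S f)"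
    unfolding g_def by (simp add: comp_assoc[symmetric])
  then show ?thesis unfolding g_def by simp
qed

lemma ncyc_id: "finite S \<Longrightarrow> ncyc S id = card S"
proof -
  have o: "\<And>i. orbit id i = {i}" by (simp add: orbit_eq_singleton_iff)
  have e: "orbit id = (\<lambda>i. {i})" by (rule ext) (rule o)
  have "inj_on (\<lambda>i. {i}) S" by (auto simp: inj_on_def)
  then have "card ((\<lambda>i. {i}) ` S) = card S" by (rule card_image)
  then show ?thesis unfolding ncyc_def e .
qed

lemma ncyc_le: "finite S \<Longrightarrow> ncyc S f \<le> card S" unfolding ncyc_def by (rule card_image_le)



lemma subadd:
  assumes rS: "\<rho> permutes S" and fin: "finite S" and r1: "ncyc S \<rho> = 1" and tS: "\<tau> permutes S"
  shows "ncyc S (\<tau> \<circ> \<rho>) + ncyc S \<tau> \<le> card S + 1"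
  using tS
proof (induction "card S - ncyc S \<tau>" arbitrary: \<tau> rule: less_induct)
  case less
  show ?case
  proof (cases "\<tau> = id")
    case True
    then show ?thesis using r1 ncyc_id[OF fin] by simp
  next
    case False
    then obtain a where fa: "\<tau> a \<noteq> a" by (metis eq_id_iff)
    have a: "a \<in> S" using fa permutes_not_in[OF less.prems] by metis
    have b: "\<tau> a \<in> S" using a less.prems permutes_in_image by metis
    define t where "t = Transposition.transpose a (\<tau> a)"
    define \<tau>' where "\<tau>' = t \<circ> \<tau>"
    have t'S: "\<tau>' permutes S" unfolding \<tau>'_def t_def by (rule permutes_compose[OF less.prems permutes_swap_id[OF a b]])
    have h1: "ncyc S \<tau>' = ncyc S \<tau> + 1" unfolding \<tau>'_def t_def by (rule L2[OF less.prems fin a fa])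
    have h2: "ncyc S \<tau>' \<le> card S" by (rule ncyc_le[OF fin])
    have IH: "ncyc S (\<tau>' \<circ> \<rho>) + ncyc S \<tau>' \<le> card S + 1"
      using less.hyps[OF _ t'S] h1 h2 by simp
    have e: "\<tau> \<circ> \<rho> = t \<circ> (\<tau>' \<circ> \<rho>)" unfolding \<tau>'_def t_def
      by (simp add: comp_assoc[symmetric])
    have "ncyc S (t \<circ> (\<tau>' \<circ> \<rho>)) \<le> ncyc S (\<tau>' \<circ> \<rho>) + 1"
      unfolding t_def by (rule L1[OF permutes_compose[OF rS t'S] fin a b])
    then show ?thesis using e IH h1 by simp
  qed
qed

definition Tr :: "'a::linorder set \<Rightarrow> ('a \<Rightarrow> 'a) set" where
  "Tr S = (\<lambda>(a,b). Transposition.transpose a b) ` {(a,b). a \<in> S \<and> b \<in> S \<and> a < b}"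

definition prodl :: "('a \<Rightarrow> 'a) list \<Rightarrow> 'a \<Rightarrow> 'a" where
  "prodl ts = foldr (\<circ>) ts id"

lemma prodl_simps[simp]: "prodl [] = id" "prodl (t # ts) = t \<circ> prodl ts"
  unfolding prodl_def by simp_all

lemma word:
  assumes fin: "finite (S::'a::linorder set)"
  shows "\<tau> permutes S \<Longrightarrow> card S - ncyc S \<tau> = j \<Longrightarrow>
     \<tau> \<in> prodl ` {ts. set ts \<subseteq> Tr S \<and> length ts = j}"
proof (induction j arbitrary: \<tau>)
  case 0
  have "\<tau> = id"
  proof (rule ccontr)
    assume "\<tau> \<noteq> id"
    then obtain a where fa: "\<tau> a \<noteq> a" by (metis eq_id_iff)
    have a: "a \<in> S" using fa permutes_not_in[OF "0.prems"(1)] by metis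
    have b: "\<tau> a \<in> S" using a "0.prems"(1) permutes_in_image by metis
    have "ncyc S (Transposition.transpose a (\<tau> a) \<circ> \<tau>) = ncyc S \<tau> + 1" by (rule L2[OF "0.prems"(1) fin a fa])
    moreover have "ncyc S (Transposition.transpose a (\<tau> a) \<circ> \<tau>) \<le> card S" by (rule ncyc_le[OF fin])
    ultimately show False using "0.prems"(2) by simp
  qed
  then show ?case by (intro image_eqI[where x="[]"]) auto
next
  case (Suc j)
  have "\<tau> \<noteq> id"
  proof
    assume "\<tau> = id"
    then have "ncyc S \<tau> = card S" using ncyc_id[OF fin] by simp
    then show False using Suc.prems(2) by simp
  qed
  then obtain a where fa: "\<tau> a \<noteq> a" by (metis eq_id_iff)
  have a: "a \<in> S" using fa permutes_not_in[OF Suc.prems(1)] by metis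
  have b: "\<tau> a \<in> S" using a Suc.prems(1) permutes_in_image by metis
  define t where "t = Transposition.transpose a (\<tau> a)"
  define \<tau>' where "\<tau>' = t \<circ> \<tau>"
  have t'S: "\<tau>' permutes S" unfolding \<tau>'_def t_def by (rule permutes_compose[OF Suc.prems(1) permutes_swap_id[OF a b]])
  have h1: "ncyc S \<tau>' = ncyc S \<tau> + 1" unfolding \<tau>'_def t_def by (rule L2[OF Suc.prems(1) fin a fa])
  have "card S - ncyc S \<tau>' = j" using h1 Suc.prems(2) by simp
  from Suc.IH[OF t'S this] obtain ts where ts0: "ts \<in> {ts. set ts \<subseteq> Tr S \<and> length ts = j}" "\<tau>' = prodl ts"
    by (rule imageE)
  then have ts: "set ts \<subseteq> Tr S" "length ts = j" "\<tau>' = prodl ts" by auto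
  have tT: "t \<in> Tr S"
  proof (cases "a < \<tau> a")
    case True then show ?thesis unfolding Tr_def t_def using a b by (auto intro!: image_eqI[where x="(a, \<tau> a)"])
  next
    case False
    then have "\<tau> a < a" using fa by auto
    then show ?thesis unfolding Tr_def t_def using a b
      by (auto simp: transpose_commute intro!: image_eqI[where x="(\<tau> a, a)"])
  qed
  have "\<tau> = t \<circ> \<tau>'" unfolding \<tau>'_def t_def by (simp add: comp_assoc[symmetric])
  then have "\<tau> = prodl (t # ts)" using ts by simp
  then show ?case using ts tT by (intro image_eqI[where x="t # ts"]) auto
qed

lemma card_Tr:
  assumes fin: "finite (S::'a::linorder set)"
  shows "2 * card (Tr S) \<le> card S * card S"
proof -
  define P where "P = {(a,b). a \<in> S \<and> b \<in> S \<and> a < b}"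
  define Q where "Q = {(a,b). a \<in> S \<and> b \<in> S \<and> b < a}"
  have PS: "P \<subseteq> S \<times> S" "Q \<subseteq> S \<times> S" unfolding P_def Q_def by auto
  have finP: "finite P" "finite Q" using PS fin finite_subset by blast+
  have "Q = prod.swap ` P"
  proof
    show "Q \<subseteq> prod.swap ` P"
    proof
      fix z assume "z \<in> Q"
      then obtain a b where z: "z = (a, b)" "a \<in> S" "b \<in> S" "b < a" unfolding Q_def by auto
      then have "(b, a) \<in> P" unfolding P_def by simp
      moreover have "z = prod.swap (b, a)" using z by simp
      ultimately show "z \<in> prod.swap ` P" by (rule rev_image_eqI)
    qed
    show "prod.swap ` P \<subseteq> Q" unfolding P_def Q_def by auto
  qed
  then have cQ: "card Q = card P" by (simp add: card_image)
  have "card (Tr S) \<le> card P" unfolding Tr_def P_def by (rule card_image_le) (use finP P_def in auto)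
  moreover have "card (P \<union> Q) = card P + card Q" using finP by (rule card_Un_disjoint) (auto simp: P_def Q_def)
  moreover have "card (P \<union> Q) \<le> card (S \<times> S)" using PS fin by (intro card_mono) auto
  ultimately show ?thesis using cQ by (simp add: card_cartesian_product)
qed

lemma card_level:
  assumes fin: "finite (S::'a::linorder set)"
  shows "card {\<tau>. \<tau> permutes S \<and> card S - ncyc S \<tau> = j} \<le> card (Tr S) ^ j"
proof -
  have "{(a,b). a \<in> S \<and> b \<in> S \<and> a < b} \<subseteq> S \<times> S" by auto
  then have "finite {(a,b). a \<in> S \<and> b \<in> S \<and> a < b}" using fin finite_subset by blast
  then have finT: "finite (Tr S)" unfolding Tr_def by (rule finite_imageI)
  have "{\<tau>. \<tau> permutes S \<and> card S - ncyc S \<tau> = j} \<subseteq> prodl ` {ts. set ts \<subseteq> Tr S \<and> length ts = j}"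
  proof
    fix \<tau> assume h: "\<tau> \<in> {\<tau>. \<tau> permutes S \<and> card S - ncyc S \<tau> = j}"
    show "\<tau> \<in> prodl ` {ts. set ts \<subseteq> Tr S \<and> length ts = j}"
      using word[OF fin, of \<tau> j] h by simp
  qed
  then have "card {\<tau>. \<tau> permutes S \<and> card S - ncyc S \<tau> = j} \<le> card (prodl ` {ts. set ts \<subseteq> Tr S \<and> length ts = j})"
    by (intro card_mono finite_imageI finite_lists_length_eq[OF finT])
  also have "\<dots> \<le> card {ts. set ts \<subseteq> Tr S \<and> length ts = j}" by (intro card_image_le finite_lists_length_eq[OF finT])
  also have "\<dots> = card (Tr S) ^ j" by (rule card_lists_length_eq[OF finT])
  finally show ?thesis .
qed

lemma AL1:
  assumes "1 \<le> k" "c \<le> k" "k + 2 \<le> 2 * c"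
  shows "real (fact k) * fact (k - c + 1) \<le> 2 * fact (k - 1) * real k ^ c"
proof -
  have "fact (k - c + 1) \<le> (of_nat ((k - c + 1) ^ (k - c + 1)) :: real)" by (rule fact_le_power)
  also have "\<dots> = (real (k - c + 1)) ^ (k - c + 1)" by (simp only: of_nat_power)
  also have "\<dots> \<le> real k ^ (k - c + 1)"
  proof (rule power_mono)
    have "k - c + 1 \<le> k" using assms by linarith
    then show "real (k - c + 1) \<le> real k" by simp
  qed simp
  also have "\<dots> \<le> real k ^ (c - 1)"
  proof (rule power_increasing)
    show "k - c + 1 \<le> c - 1" using assms by linarith
    show "1 \<le> real k" using assms by simp
  qed
  finally have f: "fact (k - c + 1) \<le> real k ^ (c - 1)" .
  have fk: "real (fact k) = real k * fact (k - 1)"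
    using fact_reduce[of k] assms(1) by simp
  have ineq: "real (fact k) * fact (k - c + 1) \<le> real k * fact (k - 1) * real k ^ (c - 1)"
    unfolding fk by (rule mult_left_mono[OF f]) simp
  have c1: "c = Suc (c - 1)" using assms by linarith
  have pk: "real k ^ c = real k * real k ^ (c - 1)" by (subst c1) (simp only: power_Suc diff_Suc_1)
  have "real k * fact (k - 1) * real k ^ (c - 1) = fact (k - 1) * (real k * real k ^ (c - 1))" by (simp only: mult_ac)
  also have "\<dots> = fact (k - 1) * real k ^ c" by (simp only: pk)
  finally have eqn: "real k * fact (k - 1) * real k ^ (c - 1) = fact (k - 1) * real k ^ c" .
  have h3: "fact (k - 1) * real k ^ c \<le> 2 * fact (k - 1) * real k ^ c" by simp
  have "real (fact k) * fact (k - c + 1) \<le> fact (k - 1) * real k ^ c" using ineq eqn by (rule ord_le_eq_trans)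
  then show ?thesis using h3 by (rule order_trans)
qed

lemma AL2:
  shows "1 \<le> c \<Longrightarrow> 2 * c \<le> k + 1 \<Longrightarrow> (real k / 2) ^ (c - 1) * fact (k - c + 1) \<le> fact k"
proof (induction c)
  case 0 then show ?case by simp
next
  case (Suc c)
  show ?case
  proof (cases "c = 0")
    case True
    then have "k - Suc c + 1 = k" using Suc.prems by simp
    then show ?thesis using True by simp
  next
    case False
    have IH: "(real k / 2) ^ (c - 1) * fact (k - c + 1) \<le> fact k" using Suc False by simp
    have kc: "real k / 2 \<le> real (k - c + 1)" using Suc.prems by auto
    have ff: "(fact (k - c + 1) :: real) = real (k - c + 1) * fact (k - c)"
      by (simp add: fact_Suc)
    have e1: "Suc c - 1 = Suc (c - 1)" using False by simp
    have e2: "k - Suc c + 1 = k - c" using Suc.prems by simp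
    have "(real k / 2) ^ (Suc c - 1) * fact (k - Suc c + 1) = (real k / 2) * ((real k / 2) ^ (c - 1) * fact (k - c))"
      unfolding e1 e2 by (simp only: power_Suc mult.assoc)
    also have "\<dots> \<le> real (k - c + 1) * ((real k / 2) ^ (c - 1) * fact (k - c))"
      by (rule mult_right_mono[OF kc]) simp
    also have "\<dots> = (real k / 2) ^ (c - 1) * fact (k - c + 1)" unfolding ff by (simp only: mult_ac)
    finally show ?thesis using IH by (rule order_trans)
  qed
qed



lemma powi_conv: "(x::real) powi (- int n) = (inverse x) ^ n"
  by (simp add: power_int_minus power_inverse)

lemma divhelp: "(b::real) > 0 \<Longrightarrow> a * b \<le> C * A * K \<Longrightarrow> a \<le> C * (A / b) * K"
  by (simp add: field_simps)

lemma h43: "A * F \<le> (B1 * B2::real) \<Longrightarrow> 0 \<le> B1 * B2 \<Longrightarrow> 4 / 3 * A * F \<le> 2 * B1 * B2"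
proof -
  assume "A * F \<le> B1 * B2" "0 \<le> B1 * B2"
  moreover have "4 / 3 * A * F = 4 / 3 * (A * F)" by (simp only: mult.assoc)
  moreover have "2 * B1 * B2 = 2 * (B1 * B2)" by (simp only: mult.assoc)
  ultimately show ?thesis by linarith
qed

theorem lemma5p11:
  fixes k :: nat and \<sigma> :: "nat \<Rightarrow> nat" and x :: real
  assumes "k \<ge> 1" and "\<sigma> \<in> Sym k" and "x > 2 * real k ^ 2"
  shows "(\<Sum>\<rho>\<in>full_cycles k. x powi (- int (cayley_weight k (\<sigma> \<circ> inv \<rho>))))
     \<le> 2 * (fact (k - 1) / fact (k - card (cyc k \<sigma>) + 1))
         * real k ^ card (cyc k \<sigma>) * x powi (1 - int (card (cyc k \<sigma>)))"
proof -
  define S where "S = {1..k}"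
  have fin: "finite S" and cardS: "card S = k" unfolding S_def by auto
  have hc: "\<And>f. card (cyc k f) = ncyc S f" unfolding cyc_def ncyc_def S_def by simp
  have hw: "\<And>f. cayley_weight k f = k - ncyc S f" unfolding cayley_weight_def hc by simp
  have sS: "\<sigma> permutes S" using assms(2) unfolding Sym_def S_def by simp
  define c where "c = ncyc S \<sigma>"
  have cle: "c \<le> k" unfolding c_def using ncyc_le[OF fin] cardS by simp
  have cge: "1 \<le> c"
  proof -
    have "S \<noteq> {}" unfolding S_def using assms(1) by simp
    then have "(\<lambda>i. orbit \<sigma> i) ` S \<noteq> {}" by simp
    moreover have "finite ((\<lambda>i. orbit \<sigma> i) ` S)" using fin by simp
    ultimately show ?thesis unfolding c_def ncyc_def by (simp add: Suc_le_eq card_gt_0_iff)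
  qed
  define FC where "FC = full_cycles k"
  have FCp: "\<And>\<rho>. \<rho> \<in> FC \<Longrightarrow> \<rho> permutes S \<and> ncyc S \<rho> = 1"
    unfolding FC_def full_cycles_def Sym_def S_def using hc S_def by auto
  define w where "w = (\<lambda>\<tau>. k - ncyc S \<tau>)"
  have wlow: "\<And>\<rho>. \<rho> \<in> FC \<Longrightarrow> c - 1 \<le> w (\<sigma> \<circ> inv \<rho>)"
  proof -
    fix \<rho> assume r: "\<rho> \<in> FC"
    have rS: "\<rho> permutes S" and r1: "ncyc S \<rho> = 1" using FCp[OF r] by auto
    have tS: "\<sigma> \<circ> inv \<rho> permutes S" by (rule permutes_compose[OF permutes_inv[OF rS] sS])
    have e: "(\<sigma> \<circ> inv \<rho>) \<circ> \<rho> = \<sigma>" using permutes_inv_o(2)[OF rS] by (simp add: comp_assoc)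
    have "ncyc S ((\<sigma> \<circ> inv \<rho>) \<circ> \<rho>) + ncyc S (\<sigma> \<circ> inv \<rho>) \<le> card S + 1"
      by (rule subadd[OF rS fin r1 tS])
    then show "c - 1 \<le> w (\<sigma> \<circ> inv \<rho>)" unfolding e w_def c_def cardS by linarith
  qed
  have xpos: "x > 0" using assms(3) by (smt (verit) zero_le_power2 of_nat_0_le_iff)
  define y where "y = inverse x"
  have ypos: "0 < y" unfolding y_def using xpos by simp
  have kx: "2 * real k ^ 2 * y < 1" unfolding y_def using assms(3) xpos
    by (simp add: field_simps)
  have k1: "1 \<le> real k" using assms(1) by simp
  have "1 \<le> real k ^ 2" using k1 by (simp add: one_le_power)
  then have "1 * y \<le> real k ^ 2 * y" using ypos by (intro mult_right_mono) auto
  then have yle: "y \<le> 1" using kx ypos by linarith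
  have L: "(\<Sum>\<rho>\<in>full_cycles k. x powi (- int (cayley_weight k (\<sigma> \<circ> inv \<rho>))))
        = (\<Sum>\<rho>\<in>FC. y ^ w (\<sigma> \<circ> inv \<rho>))"
    unfolding FC_def hw w_def y_def powi_conv ..
  have R: "x powi (1 - int (card (cyc k \<sigma>))) = y ^ (c - 1)"
  proof -
    have "1 - int (card (cyc k \<sigma>)) = - int (c - 1)" using cge unfolding hc c_def[symmetric] by simp
    then show ?thesis unfolding y_def by (simp only: powi_conv)
  qed
  have finFC: "finite FC" unfolding FC_def full_cycles_def Sym_def
    using finite_permutations[of "{1..k}"] by (simp add: Collect_conj_eq finite_Int)
  define RHS where "RHS = 2 * (fact (k - 1) / fact (k - c + 1)) * real k ^ c * y ^ (c - 1)"
  have goal: "(\<Sum>\<rho>\<in>FC. y ^ w (\<sigma> \<circ> inv \<rho>)) \<le> RHS"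
  proof (cases "k + 2 \<le> 2 * c")
    case True
    have "(\<Sum>\<rho>\<in>FC. y ^ w (\<sigma> \<circ> inv \<rho>)) \<le> of_nat (card FC) * y ^ (c - 1)"
    proof (rule sum_bounded_above)
      fix \<rho> assume "\<rho> \<in> FC"
      then show "y ^ w (\<sigma> \<circ> inv \<rho>) \<le> y ^ (c - 1)"
        using wlow power_decreasing ypos yle by (metis less_imp_le)
    qed
    also have "\<dots> \<le> fact k * y ^ (c - 1)"
    proof -
      have "FC \<subseteq> {p. p permutes S}" using FCp by auto
      then have "card FC \<le> card {p. p permutes S}" by (intro card_mono finite_permutations fin)
      also have "\<dots> = fact k" using card_permutations[OF cardS fin] .
      finally have "real (card FC) \<le> fact k" by (metis of_nat_fact of_nat_le_iff)
      then show ?thesis using ypos by (intro mult_right_mono) auto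
    qed
    also have "\<dots> \<le> RHS"
    proof -
      have a: "real (fact k) * fact (k - c + 1) \<le> 2 * fact (k - 1) * real k ^ c"
        by (rule AL1[OF assms(1) cle True])
      have "(fact k :: real) \<le> 2 * (fact (k - 1) / fact (k - c + 1)) * real k ^ c"
      proof -
        have a': "(fact k :: real) * fact (k - c + 1) \<le> 2 * fact (k - 1) * real k ^ c"
          using a by (simp only: of_nat_fact)
        show ?thesis by (rule divhelp[OF fact_gt_zero a'])
      qed
      then show ?thesis unfolding RHS_def using ypos by (intro mult_right_mono) auto
    qed
    finally show ?thesis .
  next
    case False
    then have small: "2 * c \<le> k + 1" by simp
    define g :: "(nat \<Rightarrow> nat) \<Rightarrow> nat \<Rightarrow> nat" where "g = (\<lambda>\<rho>. \<sigma> \<circ> inv \<rho>)"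
    have inj: "inj_on g FC"
    proof (rule inj_onI)
      fix \<rho>1 \<rho>2 assume r: "\<rho>1 \<in> FC" "\<rho>2 \<in> FC" and e: "g \<rho>1 = g \<rho>2"
      have injs: "inj \<sigma>" using permutes_inj[OF sS] .
      have "inv \<rho>1 = inv \<rho>2"
      proof
        fix z have "\<sigma> (inv \<rho>1 z) = \<sigma> (inv \<rho>2 z)" using e unfolding g_def by (metis comp_apply)
        then show "inv \<rho>1 z = inv \<rho>2 z" using injs by (simp add: inj_eq)
      qed
      then show "\<rho>1 = \<rho>2" using permutes_inv_inv FCp r by metis
    qed
    define B where "B = {\<tau>. \<tau> permutes S \<and> c - 1 \<le> w \<tau>}"
    have finB: "finite B" unfolding B_def using finite_permutations[OF fin] by simp
    have gB: "g ` FC \<subseteq> B"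
    proof
      fix \<tau> assume "\<tau> \<in> g ` FC"
      then obtain \<rho> where r: "\<rho> \<in> FC" "\<tau> = g \<rho>" by auto
      have "\<tau> permutes S" unfolding r g_def using FCp[OF r(1)]
        by (metis permutes_compose permutes_inv sS)
      then show "\<tau> \<in> B" unfolding B_def using wlow[OF r(1)] r g_def by simp
    qed
    have "(\<Sum>\<rho>\<in>FC. y ^ w (\<sigma> \<circ> inv \<rho>)) = (\<Sum>\<tau>\<in>g ` FC. y ^ w \<tau>)"
      using sum.reindex[OF inj, of "\<lambda>\<tau>. y ^ w \<tau>"] unfolding g_def by (simp add: comp_def)
    also have "\<dots> \<le> (\<Sum>\<tau>\<in>B. y ^ w \<tau>)"
      by (rule sum_mono2[OF finB gB]) (use ypos in simp)
    also have "\<dots> = (\<Sum>j\<in>{c - 1..k}. (\<Sum>\<tau>\<in>{\<tau> \<in> B. w \<tau> = j}. y ^ w \<tau>))"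
    proof (rule sum.group[symmetric, OF finB])
      show "finite {c - 1..k}" by simp
      show "w ` B \<subseteq> {c - 1..k}" unfolding B_def w_def by auto
    qed
    also have "\<dots> \<le> (\<Sum>j\<in>{c - 1..k}. (real k ^ 2 / 2 * y) ^ j)"
    proof (rule sum_mono)
      fix j assume "j \<in> {c - 1..k}"
      have "(\<Sum>\<tau>\<in>{\<tau> \<in> B. w \<tau> = j}. y ^ w \<tau>) = (\<Sum>\<tau>\<in>{\<tau> \<in> B. w \<tau> = j}. y ^ j)"
        by (rule sum.cong) auto
      also have "\<dots> = real (card {\<tau> \<in> B. w \<tau> = j}) * y ^ j" by simp
      also have "\<dots> \<le> (real k ^ 2 / 2) ^ j * y ^ j"
      proof (rule mult_right_mono)
        have "{\<tau> \<in> B. w \<tau> = j} \<subseteq> {\<tau>. \<tau> permutes S \<and> card S - ncyc S \<tau> = j}"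
          unfolding B_def w_def cardS by auto
        then have "card {\<tau> \<in> B. w \<tau> = j} \<le> card {\<tau>. \<tau> permutes S \<and> card S - ncyc S \<tau> = j}"
          by (intro card_mono) (auto intro: finite_subset[OF _ finite_permutations[OF fin]])
        also have "\<dots> \<le> card (Tr S) ^ j" by (rule card_level[OF fin])
        finally have c1: "real (card {\<tau> \<in> B. w \<tau> = j}) \<le> real (card (Tr S)) ^ j"
          by (metis of_nat_le_iff of_nat_power)
        have "real (card (Tr S)) \<le> real k ^ 2 / 2"
        proof -
          have "2 * card (Tr S) \<le> k * k" using card_Tr[OF fin] cardS by simp
          then have "2 * real (card (Tr S)) \<le> real k * real k" by (metis of_nat_le_iff of_nat_mult of_nat_numeral)
          then show ?thesis by (simp add: power2_eq_square)
        qed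
        then have "real (card (Tr S)) ^ j \<le> (real k ^ 2 / 2) ^ j" by (intro power_mono) auto
        then show "real (card {\<tau> \<in> B. w \<tau> = j}) \<le> (real k ^ 2 / 2) ^ j" using c1 by linarith
      qed (use ypos in simp)
      also have "\<dots> = (real k ^ 2 / 2 * y) ^ j" by (simp only: power_mult_distrib)
      finally show "(\<Sum>\<tau>\<in>{\<tau> \<in> B. w \<tau> = j}. y ^ w \<tau>) \<le> (real k ^ 2 / 2 * y) ^ j" .
    qed
    also have "\<dots> \<le> 4 / 3 * (real k ^ 2 / 2 * y) ^ (c - 1)"
    proof -
      define r where "r = real k ^ 2 / 2 * y"
      have r0: "0 \<le> r" unfolding r_def using ypos by auto
      have "r = (2 * real k ^ 2 * y) / 4" unfolding r_def by simp
      then have r4: "r < 1 / 4" using kx by linarith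
      have "(\<Sum>j\<in>{c - 1..k}. r ^ j) = (r ^ (c - 1) - r ^ Suc k) / (1 - r)"
        using r4 cle by (subst sum_gp) auto
      also have "\<dots> \<le> r ^ (c - 1) / (1 - r)" using r0 r4 by (intro divide_right_mono) auto
      also have "\<dots> \<le> 4 / 3 * r ^ (c - 1)"
      proof -
        define q where "q = r ^ (c - 1)"
        have p: "0 \<le> q" unfolding q_def using r0 by simp
        have h: "(4 * r) * q \<le> 1 * q" using mult_right_mono[of "4*r" 1 q] r4 p by simp
        have "q \<le> 4 / 3 * q * (1 - r)" using h by (simp add: algebra_simps)
        then have "q / (1 - r) \<le> 4 / 3 * q" using r4 by (simp add: pos_divide_le_eq)
        then show ?thesis unfolding q_def .
      qed
      finally show ?thesis unfolding r_def .
    qed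
    also have "\<dots> \<le> RHS"
    proof -
      have a2: "(real k / 2) ^ (c - 1) * fact (k - c + 1) \<le> fact k" by (rule AL2[OF cge small])
      have pk: "real k ^ c = real k * real k ^ (c - 1)" using cge by (cases c) auto
      have fk: "(fact k :: real) = real k * fact (k - 1)" using fact_reduce[of k] assms(1) by simp
      have "(real k ^ 2 / 2) ^ (c - 1) = real k ^ (c - 1) * (real k / 2) ^ (c - 1)"
        by (simp add: power2_eq_square power_mult_distrib[symmetric])
      then have "(real k ^ 2 / 2) ^ (c - 1) * fact (k - c + 1) = real k ^ (c - 1) * ((real k / 2) ^ (c - 1) * fact (k - c + 1))"
        by simp
      also have "\<dots> \<le> real k ^ (c - 1) * fact k" by (rule mult_left_mono[OF a2]) simp
      also have "\<dots> = fact (k - 1) * real k ^ c" unfolding pk fk by simp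
      finally have a3: "(real k ^ 2 / 2) ^ (c - 1) * fact (k - c + 1) \<le> fact (k - 1) * real k ^ c" .
      have "4 / 3 * (real k ^ 2 / 2) ^ (c - 1) * fact (k - c + 1) \<le> 2 * fact (k - 1) * real k ^ c"
        by (rule h43[OF a3]) simp
      then have "4 / 3 * (real k ^ 2 / 2) ^ (c - 1) \<le> 2 * (fact (k - 1) / fact (k - c + 1)) * real k ^ c"
        by (rule divhelp[OF fact_gt_zero])
      then have fin1: "4 / 3 * (real k ^ 2 / 2) ^ (c - 1) * y ^ (c - 1) \<le> RHS"
        unfolding RHS_def using ypos by (intro mult_right_mono) auto
      have "(real k ^ 2 / 2 * y) ^ (c - 1) = (real k ^ 2 / 2) ^ (c - 1) * y ^ (c - 1)" by (simp only: power_mult_distrib)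
      then show ?thesis using fin1 by (simp only: mult.assoc)
    qed
    finally show ?thesis .
  qed
  have cc: "card (cyc k \<sigma>) = c" unfolding c_def hc ..
  show ?thesis unfolding L R unfolding cc using goal unfolding RHS_def .
qed

end
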